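(* Let $m,n,r,p,s$ be positive integers. Let $\mathbf{A}\in\mathbb{R}^{m\times n}$ and suppose $$\mathbf{A}=\mathbf{U}\mathbf{S}\mathbf{V}+\mathbf{E},$$ where $\mathbf{U}\in\mathbb{R}^{m\times r}$ has orthonormal columns ($\mathbf{U}^\top\mathbf{U}=\mathbf{I}_r$), $\mathbf{S}\in\mathbb{R}^{r\times r}$, $\mathbf{V}\in\mathbb{R}^{r\times n}$ has orthonormal rows ($\mathbf{V}\mathbf{V}^\top=\mathbf{I}_r$), and the error $\mathbf{E}\in\mathbb{R}^{m\times n}$ satisfies $\mathbf{U}^\top\mathbf{E}=\mathbf{0}$. Let $\mathbf{B}\in\mathbb{R}^{p\times n}$ be written as $$\mathbf{B}=\mathbf{P}\mathbf{V}+\mathbf{L}\mathbf{Q},$$ where $\mathbf{P}\in\mathbb{R}^{p\times r}$, $\mathbf{L}\in\mathbb{R}^{p\times s}$, and $\mathbf{Q}\in\mathbb{R}^{s\times n}$ has orthonormal rows ($\mathbf{Q}\mathbf{Q}^\top=\mathbf{I}_s$) with $\mathbf{V}\mathbf{Q}^\top=\mathbf{0}$. Define $$\mathbf{S}'=\begin{bmatrix}\mathbf{S}&\mathbf{0}\\ \mathbf{P}&\mathbf{L}\end{bmatrix}\in\mathbb{R}^{(r+p)\times(r+s)},$$ and let $\mathbf{U}'\in\mathbb{R}^{(r+p)\times q}$, $\tilde{\mathbf{S}}\in\mathbb{R}^{q\times q}$, $\mathbf{V}'\in\mathbb{R}^{q\times(r+s)}$ be any matrices (for some positive integer $q$), with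 $\mathbf{E}'=\mathbf{S}'-\mathbf{U}'\tilde{\mathbf{S}}\mathbf{V}'$. Set $$\tilde{\mathbf{A}}=\begin{bmatrix}\mathbf{A}\\ \mathbf{B}\end{bmatrix},\quad \tilde{\mathbf{U}}=\begin{bmatrix}\mathbf{U}&\mathbf{0}\\ \mathbf{0}&\mathbf{I}_p\end{bmatrix}\mathbf{U}',\quad \tilde{\mathbf{V}}=\mathbf{V}'\begin{bmatrix}\mathbf{V}\\ \mathbf{Q}\end{bmatrix}.$$ Then $$\|\tilde{\mathbf{A}}-\tilde{\mathbf{U}}\tilde{\mathbf{S}}\tilde{\mathbf{V}}\|_F^2=\|\mathbf{E}\|_F^2+\|\mathbf{E}'\|_F^2 = \|\mathbf{A}-\mathbf{U}\mathbf{S}\mathbf{V}\|_F^2+\|\mathbf{S}'-\mathbf{U}'\tilde{\mathbf{S}}\mathbf{V}'\|_F^2.$$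
   Context: $\|\cdot\|_F$ denotes the Frobenius norm; $\mathbf{I}_k$ is the $k\times k$ identity matrix and $\mathbf{0}$ denotes a zero matrix of the appropriate size. *)

theory Defs
  imports "Jordan_Normal_Form.Matrix"
begin

definition frobenius_norm :: "real mat \<Rightarrow> real" where
  "frobenius_norm A = sqrt (\<Sum>i<dim_row A. \<Sum>j<dim_col A. (A $$ (i,j))^2)"

end

theory Submission
  imports Defs
begin

definition mip :: "real mat \<Rightarrow> real mat \<Rightarrow> real" where
  "mip X Y = (\<Sum>i<dim_row X. \<Sum>j<dim_col X. X $$ (i,j) * Y $$ (i,j))"

lemma fro_sq: "(frobenius_norm X)^2 = mip X X"
  unfolding frobenius_norm_def mip_def
  by (subst real_sqrt_pow2) (auto intro!: sum_nonneg simp: power2_eq_square)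

lemma mip_mult_left:
  assumes X: "X \<in> carrier_mat a b" and W: "W \<in> carrier_mat a c" and Y: "Y \<in> carrier_mat c b"
  shows "mip X (W * Y) = mip (transpose_mat W * X) Y"
proof -
  have "mip X (W * Y) = (\<Sum>i<a. \<Sum>j<b. \<Sum>k<c. X $$ (i,j) * (W $$ (i,k) * Y $$ (k,j)))"
    using X W Y by (auto simp: mip_def scalar_prod_def sum_distrib_left lessThan_atLeast0 intro!: sum.cong)
  also have "\<dots> = (\<Sum>k<c. \<Sum>j<b. \<Sum>i<a. X $$ (i,j) * (W $$ (i,k) * Y $$ (k,j)))"
  proof -
    have "\<And>f :: nat \<Rightarrow> nat \<Rightarrow> nat \<Rightarrow> real. (\<Sum>i<a. \<Sum>j<b. \<Sum>k<c. f i j k) = (\<Sum>k<c. \<Sum>j<b. \<Sum>i<a. f i j k)"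
    proof -
      fix f :: "nat \<Rightarrow> nat \<Rightarrow> nat \<Rightarrow> real"
      have "(\<Sum>i<a. \<Sum>j<b. \<Sum>k<c. f i j k) = (\<Sum>i<a. \<Sum>k<c. \<Sum>j<b. f i j k)"
        by (rule sum.cong, simp, rule sum.swap)
      also have "\<dots> = (\<Sum>k<c. \<Sum>i<a. \<Sum>j<b. f i j k)" by (rule sum.swap)
      also have "\<dots> = (\<Sum>k<c. \<Sum>j<b. \<Sum>i<a. f i j k)"
        by (rule sum.cong, simp, rule sum.swap)
      finally show "(\<Sum>i<a. \<Sum>j<b. \<Sum>k<c. f i j k) = (\<Sum>k<c. \<Sum>j<b. \<Sum>i<a. f i j k)" .
    qed
    then show ?thesis .
  qed
  also have "\<dots> = mip (transpose_mat W * X) Y"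
    using X W Y by (auto simp: mip_def scalar_prod_def sum_distrib_right lessThan_atLeast0 intro!: sum.cong)
  finally show ?thesis .
qed

lemma mip_mult_right:
  assumes X: "X \<in> carrier_mat a b" and Z: "Z \<in> carrier_mat c b" and Y: "Y \<in> carrier_mat a c"
  shows "mip X (Y * Z) = mip (X * transpose_mat Z) Y"
proof -
  have "mip X (Y * Z) = (\<Sum>i<a. \<Sum>j<b. \<Sum>k<c. X $$ (i,j) * (Y $$ (i,k) * Z $$ (k,j)))"
    using X Z Y by (auto simp: mip_def scalar_prod_def sum_distrib_left lessThan_atLeast0 intro!: sum.cong)
  also have "\<dots> = (\<Sum>i<a. \<Sum>k<c. \<Sum>j<b. X $$ (i,j) * (Y $$ (i,k) * Z $$ (k,j)))"
    by (rule sum.cong, simp, rule sum.swap)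
  also have "\<dots> = mip (X * transpose_mat Z) Y"
    using X Z Y by (auto simp: mip_def scalar_prod_def sum_distrib_left lessThan_atLeast0 intro!: sum.cong) (auto simp: sum_distrib_right intro!: sum.cong)
  finally show ?thesis .
qed

lemma mip_add_right:
  assumes "X \<in> carrier_mat a b" "Y \<in> carrier_mat a b" "Z \<in> carrier_mat a b"
  shows "mip X (Y + Z) = mip X Y + mip X Z"
  using assms by (auto simp: mip_def distrib_left sum.distrib)

lemma mip_add_left:
  assumes "X \<in> carrier_mat a b" "Y \<in> carrier_mat a b" "Z \<in> carrier_mat a b"
  shows "mip (Y + Z) X = mip Y X + mip Z X"
  using assms by (auto simp: mip_def distrib_right sum.distrib)

lemma mip_zero_left: "mip (0\<^sub>m a b) X = 0"
  by (simp add: mip_def)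

lemma mip_comm:
  assumes "X \<in> carrier_mat a b" "Y \<in> carrier_mat a b"
  shows "mip X Y = mip Y X"
  using assms by (auto simp: mip_def mult.commute)

lemma mip_orth_left:
  assumes X: "X \<in> carrier_mat c b" and W: "W \<in> carrier_mat a c" and WW: "transpose_mat W * W = 1\<^sub>m c"
  shows "mip (W * X) (W * X) = mip X X"
proof -
  have "mip (W * X) (W * X) = mip (transpose_mat W * (W * X)) X"
    using X W by (intro mip_mult_left) auto
  also have "transpose_mat W * (W * X) = X"
    using X W WW by (subst assoc_mult_mat[symmetric]) auto
  finally show ?thesis .
qed

lemma mip_orth_right:
  assumes X: "X \<in> carrier_mat a c" and Z: "Z \<in> carrier_mat c b" and ZZ: "Z * transpose_mat Z = 1\<^sub>m c"
  shows "mip (X * Z) (X * Z) = mip X X"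
proof -
  have "mip (X * Z) (X * Z) = mip ((X * Z) * transpose_mat Z) X"
    using X Z by (intro mip_mult_right) auto
  also have "(X * Z) * transpose_mat Z = X"
    using X Z ZZ by (subst assoc_mult_mat) auto
  finally show ?thesis .
qed

theorem mainTheorem1:
  fixes m n r p s q :: nat
    and A U S V E B P L Q U' St V' :: "real mat"
  assumes "0 < m" "0 < n" "0 < r" "0 < p" "0 < s" "0 < q"
    and "A \<in> carrier_mat m n"
    and "U \<in> carrier_mat m r" and "S \<in> carrier_mat r r" and "V \<in> carrier_mat r n"
    and "E \<in> carrier_mat m n"
    and "A = U * S * V + E"
    and "transpose_mat U * U = 1\<^sub>m r"
    and "V * transpose_mat V = 1\<^sub>m r"
    and "transpose_mat U * E = 0\<^sub>m r n"
    and "B \<in> carrier_mat p n"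
    and "P \<in> carrier_mat p r" and "L \<in> carrier_mat p s" and "Q \<in> carrier_mat s n"
    and "B = P * V + L * Q"
    and "Q * transpose_mat Q = 1\<^sub>m s"
    and "V * transpose_mat Q = 0\<^sub>m r s"
    and "U' \<in> carrier_mat (r + p) q" and "St \<in> carrier_mat q q" and "V' \<in> carrier_mat q (r + s)"
  shows "let S' = four_block_mat S (0\<^sub>m r s) P L;
             E' = S' - U' * St * V';
             At = A @\<^sub>r B;
             Ut = four_block_mat U (0\<^sub>m m p) (0\<^sub>m p r) (1\<^sub>m p) * U';
             Vt = V' * (V @\<^sub>r Q)
         in (frobenius_norm (At - Ut * St * Vt))^2
              = (frobenius_norm E)^2 + (frobenius_norm E')^2
          \<and> (frobenius_norm E)^2 + (frobenius_norm E')^2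
              = (frobenius_norm (A - U * S * V))^2 + (frobenius_norm (S' - U' * St * V'))^2"
proof -
  have cA: "A \<in> carrier_mat m n" and cU: "U \<in> carrier_mat m r" and cS: "S \<in> carrier_mat r r"
    and cV: "V \<in> carrier_mat r n" and cE: "E \<in> carrier_mat m n" and cB: "B \<in> carrier_mat p n"
    and cP: "P \<in> carrier_mat p r" and cL: "L \<in> carrier_mat p s" and cQ: "Q \<in> carrier_mat s n"
    and cU': "U' \<in> carrier_mat (r + p) q" and cSt: "St \<in> carrier_mat q q" and cV': "V' \<in> carrier_mat q (r + s)"
    using assms by auto
  note UU = assms(13) and VV = assms(14) and UE = assms(15) and QQ = assms(21) and VQ = assms(22)
  define S' where "S' = four_block_mat S (0\<^sub>m r s) P L"
  define M where "M = U' * St * V'"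
  define E' where "E' = S' - M"
  define W where "W = four_block_mat U (0\<^sub>m m p) (0\<^sub>m p r) (1\<^sub>m p)"
  define Z where "Z = V @\<^sub>r Q"
  define Eh where "Eh = E @\<^sub>r 0\<^sub>m p n"
  have cS': "S' \<in> carrier_mat (r + p) (r + s)" using cS cP cL by (simp add: S'_def)
  have cM: "M \<in> carrier_mat (r + p) (r + s)" using cU' cSt cV' by (simp add: M_def)
  have cE': "E' \<in> carrier_mat (r + p) (r + s)" using cS' cM by (simp add: E'_def minus_carrier_mat)
  have cW: "W \<in> carrier_mat (m + p) (r + p)" using cU by (simp add: W_def)
  have cZ: "Z \<in> carrier_mat (r + s) n" using cV cQ by (simp add: Z_def)
  have cEh: "Eh \<in> carrier_mat (m + p) n" using cE by (simp add: Eh_def)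
  have Zdef: "Z = four_block_mat V (0\<^sub>m r 0) Q (0\<^sub>m s 0)"
    using cV cQ by (simp add: Z_def append_rows_def)
  have Ehdef: "Eh = four_block_mat E (0\<^sub>m m 0) (0\<^sub>m p n) (0\<^sub>m p 0)"
    using cE by (simp add: Eh_def append_rows_def)
  have WW: "transpose_mat W * W = 1\<^sub>m (r + p)"
  proof -
    have T: "transpose_mat W = four_block_mat (transpose_mat U) (0\<^sub>m r p) (0\<^sub>m p m) (1\<^sub>m p)"
      unfolding W_def using cU by (subst transpose_four_block_mat) auto
    have "transpose_mat W * W = four_block_mat (transpose_mat U * U + 0\<^sub>m r p * 0\<^sub>m p r)
       (transpose_mat U * 0\<^sub>m m p + 0\<^sub>m r p * 1\<^sub>m p) (0\<^sub>m p m * U + 1\<^sub>m p * 0\<^sub>m p r)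
       (0\<^sub>m p m * 0\<^sub>m m p + 1\<^sub>m p * 1\<^sub>m p)"
      unfolding T unfolding W_def using cU by (subst mult_four_block_mat[of _ r m _ p _ p _ _ r _ p]; simp)
    also have "\<dots> = 1\<^sub>m (r + p)" using cU UU by simp
    finally show ?thesis .
  qed
  have QV: "Q * transpose_mat V = 0\<^sub>m s r"
  proof -
    have "Q * transpose_mat V = transpose_mat (V * transpose_mat Q)"
      using cV cQ by (simp add: transpose_mult[of _ r n _ s])
    then show ?thesis using VQ by simp
  qed
  have ZZ: "Z * transpose_mat Z = 1\<^sub>m (r + s)"
  proof -
    have T: "transpose_mat Z = four_block_mat (transpose_mat V) (transpose_mat Q) (0\<^sub>m 0 r) (0\<^sub>m 0 s)"
      unfolding Zdef using cV cQ by (subst transpose_four_block_mat) auto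
    have "Z * transpose_mat Z = four_block_mat (V * transpose_mat V + 0\<^sub>m r 0 * 0\<^sub>m 0 r)
       (V * transpose_mat Q + 0\<^sub>m r 0 * 0\<^sub>m 0 s) (Q * transpose_mat V + 0\<^sub>m s 0 * 0\<^sub>m 0 r)
       (Q * transpose_mat Q + 0\<^sub>m s 0 * 0\<^sub>m 0 s)"
      unfolding T unfolding Zdef using cV cQ by (subst mult_four_block_mat[of _ r n _ 0 _ s _ _ r _ s]; simp)
    also have "\<dots> = 1\<^sub>m (r + s)" using cV cQ VV QQ VQ QV by simp
    finally show ?thesis .
  qed
  have WEh: "transpose_mat W * Eh = 0\<^sub>m (r + p) n"
  proof -
    have T: "transpose_mat W = four_block_mat (transpose_mat U) (0\<^sub>m r p) (0\<^sub>m p m) (1\<^sub>m p)"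
      unfolding W_def using cU by (subst transpose_four_block_mat) auto
    have "transpose_mat W * Eh = four_block_mat (transpose_mat U * E + 0\<^sub>m r p * 0\<^sub>m p n)
       (transpose_mat U * 0\<^sub>m m 0 + 0\<^sub>m r p * 0\<^sub>m p 0) (0\<^sub>m p m * E + 1\<^sub>m p * 0\<^sub>m p n)
       (0\<^sub>m p m * 0\<^sub>m m 0 + 1\<^sub>m p * 0\<^sub>m p 0)"
      unfolding T unfolding Ehdef using cU cE by (subst mult_four_block_mat[of _ r m _ p _ p _ _ n _ 0]; simp)
    also have "\<dots> = 0\<^sub>m (r + p) n" using cU cE UE by simp
    finally show ?thesis .
  qed
  have mipEh: "mip Eh Eh = mip E E"
  proof -
    have "mip Eh Eh = (\<Sum>i<m+p. if i < m then (\<Sum>j<n. E $$ (i,j) * E $$ (i,j)) else 0)"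
      using cE cEh by (auto simp: mip_def Ehdef intro!: sum.cong)
    also have "\<dots> = (\<Sum>i\<in>{..<m+p} \<inter> {i. i < m}. (\<Sum>j<n. E $$ (i,j) * E $$ (i,j)))"
      by (simp add: sum.inter_restrict)
    also have "{..<m+p} \<inter> {i. i < m} = {..<m}" by auto
    finally show ?thesis using cE by (simp add: mip_def)
  qed
  have WS': "W * S' = four_block_mat (U * S) (0\<^sub>m m s) P L"
    unfolding W_def S'_def using cU cS cP cL by (subst mult_four_block_mat[of _ m r _ p _ p _ _ r _ s]; simp)
  have WS'Z: "W * S' * Z = (U * S * V) @\<^sub>r B"
    unfolding WS' Zdef using cU cS cV cP cL cQ assms(20)
    by (subst mult_four_block_mat[of _ m r _ s _ p _ _ n _ 0]; simp add: append_rows_def)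
  have At: "A @\<^sub>r B = W * S' * Z + Eh"
    unfolding WS'Z Ehdef using cU cS cV cB cE assms(12)
    by (simp add: append_rows_def, subst add_four_block_mat[of _ m n _ 0 _ p]; simp)
  have Ut: "four_block_mat U (0\<^sub>m m p) (0\<^sub>m p r) (1\<^sub>m p) * U' * St * (V' * (V @\<^sub>r Q)) = W * M * Z"
  proof -
    have a1: "W * U' * St * (V' * Z) = W * U' * St * V' * Z"
      using cW cU' cSt cV' cZ by (subst assoc_mult_mat[of _ "m+p" q _ "r+s" _ n]) auto
    have a2: "W * U' * St = W * (U' * St)"
      using cW cU' cSt by (rule assoc_mult_mat)
    have a3: "W * (U' * St) * V' = W * (U' * St * V')"
      using cW cU' cSt cV' by (intro assoc_mult_mat) auto
    show ?thesis unfolding W_def[symmetric] Z_def[symmetric] M_def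
      by (subst a1, subst a2, subst a3, rule refl)
  qed
  have WE'Z: "W * (E' * Z) = W * S' * Z - W * M * Z"
    unfolding E'_def using cW cS' cM cZ
    by (simp add: minus_mult_distrib_mat[of _ "r+p" "r+s"],
        subst mult_minus_distrib_mat[of W "m+p" "r+p" "S' * Z" n "M * Z"]; simp)
  have main: "(A @\<^sub>r B) - four_block_mat U (0\<^sub>m m p) (0\<^sub>m p r) (1\<^sub>m p) * U' * St * (V' * (V @\<^sub>r Q)) = W * (E' * Z) + Eh"
    unfolding Ut At WE'Z using cW cS' cM cZ cEh by (intro eq_matI) auto
  have cX: "W * (E' * Z) \<in> carrier_mat (m + p) n" using cW cE' cZ by simp
  have cross: "mip Eh (W * (E' * Z)) = 0"
    using cEh cW cE' cZ WEh by (simp add: mip_mult_left[of _ "m+p" n _ "r+p"] mip_zero_left)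
  have n1: "mip (W * (E' * Z) + Eh) (W * (E' * Z) + Eh) = mip E E + mip E' E'"
  proof -
    have "mip (W * (E' * Z) + Eh) (W * (E' * Z) + Eh) = mip (W * (E' * Z)) (W * (E' * Z)) + mip (W * (E' * Z)) Eh
          + (mip Eh (W * (E' * Z)) + mip Eh Eh)"
      using cX cEh by (simp add: mip_add_left[of _ "m+p" n] mip_add_right[of _ "m+p" n])
    also have "mip (W * (E' * Z)) Eh = mip Eh (W * (E' * Z))" using cX cEh by (rule mip_comm)
    also have "mip (W * (E' * Z)) (W * (E' * Z)) = mip (E' * Z) (E' * Z)"
      using cE' cZ cW WW by (intro mip_orth_left) auto
    also have "\<dots> = mip E' E'" using cE' cZ ZZ by (rule mip_orth_right)
    finally show ?thesis using cross mipEh by simp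
  qed
  have AE: "A - U * S * V = E" using cU cS cV cE assms(12) by (intro eq_matI) auto
  show ?thesis
    unfolding Let_def S'_def[symmetric] M_def[symmetric] E'_def[symmetric] main fro_sq n1 AE
    by simp
qed

end
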